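(* Let $T:\mathcal{M}_d\to\mathcal{M}_d$ be a doubly stochastic quantum channel. The following are equivalent: (1) $T$ is primitive; (2) there exists $n\in\mathbb{N}$ such that $(T^* )^nT^n$ is primitive.
   Context: A quantum channel is a completely positive trace-preserving map; doubly stochastic means $T(\mathbb{1})=T^*(\mathbb{1})=\mathbb{1}$, with $T^*$ the Hilbert–Schmidt adjoint. A doubly stochastic channel $S$ is primitive if $\lim_{k\to\infty}S^k(\rho)=\mathbb{1}_d/d$ for every density matrix $\rho$. *)

theory Defs
  imports Complex_Main "Jordan_Normal_Form.Matrix"
begin

text \<open>Matrices in M_d are represented as complex matrices in carrier_mat d d;
  superoperators are functions complex mat => complex mat, of which only the
  behaviour on carrier_mat d d is relevant.\<close>

definition cdagger :: "complex mat \<Rightarrow> complex mat" where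
  "cdagger A = mat (dim_col A) (dim_row A) (\<lambda>(i,j). cnj (A $$ (j,i)))"

definition ctrace :: "complex mat \<Rightarrow> complex" where
  "ctrace A = (\<Sum>i<dim_row A. A $$ (i,i))"

definition psd :: "nat \<Rightarrow> complex mat \<Rightarrow> bool" where
  "psd n A \<longleftrightarrow> A \<in> carrier_mat n n \<and> cdagger A = A \<and>
     (\<forall>v :: nat \<Rightarrow> complex.
        Re (\<Sum>i<n. \<Sum>j<n. cnj (v i) * A $$ (i,j) * v j) \<ge> 0)"

definition density :: "nat \<Rightarrow> complex mat \<Rightarrow> bool" where
  "density d \<rho> \<longleftrightarrow> psd d \<rho> \<and> ctrace \<rho> = 1"

definition linear_superop :: "nat \<Rightarrow> (complex mat \<Rightarrow> complex mat) \<Rightarrow> bool" where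
  "linear_superop d T \<longleftrightarrow>
     (\<forall>A \<in> carrier_mat d d. T A \<in> carrier_mat d d) \<and>
     (\<forall>A \<in> carrier_mat d d. \<forall>B \<in> carrier_mat d d. \<forall>c :: complex.
        T (c \<cdot>\<^sub>m A + B) = c \<cdot>\<^sub>m T A + T B)"

text \<open>Ampliation id_k \<otimes> T acting on M_k(M_d) = M_{kd}: the (a,b) block of size d
  (rows a*d..a*d+d-1, columns b*d..b*d+d-1) is mapped by T.\<close>
definition ampliation :: "nat \<Rightarrow> nat \<Rightarrow> (complex mat \<Rightarrow> complex mat) \<Rightarrow> complex mat \<Rightarrow> complex mat" where
  "ampliation k d T X = mat (k*d) (k*d) (\<lambda>(r,s).
      T (mat d d (\<lambda>(p,q). X $$ ((r div d) * d + p, (s div d) * d + q))) $$ (r mod d, s mod d))"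

definition completely_positive :: "nat \<Rightarrow> (complex mat \<Rightarrow> complex mat) \<Rightarrow> bool" where
  "completely_positive d T \<longleftrightarrow>
     (\<forall>k :: nat. \<forall>X. psd (k*d) X \<longrightarrow> psd (k*d) (ampliation k d T X))"

definition trace_preserving :: "nat \<Rightarrow> (complex mat \<Rightarrow> complex mat) \<Rightarrow> bool" where
  "trace_preserving d T \<longleftrightarrow> (\<forall>A \<in> carrier_mat d d. ctrace (T A) = ctrace A)"

definition quantum_channel :: "nat \<Rightarrow> (complex mat \<Rightarrow> complex mat) \<Rightarrow> bool" where
  "quantum_channel d T \<longleftrightarrow> linear_superop d T \<and> completely_positive d T \<and> trace_preserving d T"

definition is_hs_adjoint :: "nat \<Rightarrow> (complex mat \<Rightarrow> complex mat) \<Rightarrow> (complex mat \<Rightarrow> complex mat) \<Rightarrow> bool" where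
  "is_hs_adjoint d T S \<longleftrightarrow>
     (\<forall>A \<in> carrier_mat d d. S A \<in> carrier_mat d d) \<and>
     (\<forall>A \<in> carrier_mat d d. \<forall>B \<in> carrier_mat d d.
        ctrace (cdagger A * T B) = ctrace (cdagger (S A) * B))"

definition doubly_stochastic_channel ::
  "nat \<Rightarrow> (complex mat \<Rightarrow> complex mat) \<Rightarrow> (complex mat \<Rightarrow> complex mat) \<Rightarrow> bool" where
  "doubly_stochastic_channel d T Tadj \<longleftrightarrow>
     quantum_channel d T \<and> T (1\<^sub>m d) = 1\<^sub>m d \<and> Tadj (1\<^sub>m d) = 1\<^sub>m d"

definition primitive :: "nat \<Rightarrow> (complex mat \<Rightarrow> complex mat) \<Rightarrow> bool" where
  "primitive d S \<longleftrightarrow>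
     (\<forall>\<rho>. density d \<rho> \<longrightarrow>
        (\<forall>i<d. \<forall>j<d. (\<lambda>k. (S ^^ k) \<rho> $$ (i,j)) \<longlonglongrightarrow>
            (if i = j then 1 / of_nat d else 0)))"

end

theory Submission
  imports Defs "HOL-Analysis.Convex"
begin


definition Em :: "nat \<Rightarrow> nat \<Rightarrow> nat \<Rightarrow> complex mat" where
  "Em d a b = mat d d (\<lambda>(i,j). if i = a \<and> j = b then 1 else 0)"
definition ent :: "nat \<Rightarrow> complex mat \<Rightarrow> nat \<Rightarrow> complex" where
  "ent d A l = A $$ (l div d, l mod d)"
definition hs :: "nat \<Rightarrow> complex mat \<Rightarrow> complex mat \<Rightarrow> complex" where
  "hs d A B = (\<Sum>l<d*d. cnj (ent d A l) * ent d B l)"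
definition hn :: "nat \<Rightarrow> complex mat \<Rightarrow> real" where
  "hn d A = (\<Sum>l<d*d. (cmod (ent d A l))\<^sup>2)"
definition dl :: "nat \<Rightarrow> nat \<Rightarrow> complex" where
  "dl d l = (if l div d = l mod d then 1 else 0)"

lemma idx: "l < d*d \<Longrightarrow> l div d < d \<and> l mod d < d" for l d :: nat
proof -
  assume l: "l < d*d"
  hence "d > 0" by (cases d) auto
  thus ?thesis using l by (simp add: less_mult_imp_div_less)
qed
lemma idx2: "i < d \<Longrightarrow> j < d \<Longrightarrow> (i*d+j) div d = i \<and> (i*d+j) mod d = j \<and> i*d+j < d*d"
  for i j d :: nat
proof -
  assume a: "i < d" "j < d"
  have "i*d+j < i*d+d" using a by simp
  also have "\<dots> = (Suc i)*d" by simp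
  also have "\<dots> \<le> d*d" using a by (intro mult_right_mono) auto
  finally have 3: "i*d+j < d*d" .
  have 1: "(i*d+j) div d = i" using a by simp
  have 2: "(i*d+j) mod d = j" using a by simp
  show ?thesis using 1 2 3 by blast
qed
lemma dsum: "(\<Sum>i<d. \<Sum>j<d. f i j) = (\<Sum>l<d*d. f (l div d) (l mod d))" for d :: nat
proof -
  have "(\<Sum>i<d. \<Sum>j<d. f i j) = (\<Sum>p\<in>{..<d}\<times>{..<d}. f (fst p) (snd p))"
    by (simp add: sum.cartesian_product split_def)
  also have "\<dots> = (\<Sum>l<d*d. f (l div d) (l mod d))"
    apply (rule sum.reindex_bij_witness[where i="\<lambda>l. (l div d, l mod d)" and j="\<lambda>p. fst p * d + snd p"])
    subgoal for a by (cases a) (simp add: idx2)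
    subgoal for a by (cases a) (simp add: idx2)
    subgoal for b by simp
    subgoal for b using idx[of b d] by simp
    subgoal for a by (cases a) (simp add: idx2)
    done
  finally show ?thesis .
qed

lemma cs: "(cmod (\<Sum>l\<in>I. a l * b l))\<^sup>2 \<le> (\<Sum>l\<in>I. (cmod (a l))\<^sup>2) * (\<Sum>l\<in>I. (cmod (b l))\<^sup>2)"
proof -
  have "cmod (\<Sum>l\<in>I. a l * b l) \<le> (\<Sum>l\<in>I. cmod (a l * b l))"
    by (rule norm_sum)
  also have "\<dots> = (\<Sum>l\<in>I. cmod (a l) * cmod (b l))" by (simp add: norm_mult)
  finally have h: "cmod (\<Sum>l\<in>I. a l * b l) \<le> (\<Sum>l\<in>I. cmod (a l) * cmod (b l))" .
  have "(cmod (\<Sum>l\<in>I. a l * b l))\<^sup>2 \<le> (\<Sum>l\<in>I. cmod (a l) * cmod (b l))\<^sup>2"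
    by (rule power_mono[OF h]) simp
  also have "\<dots> \<le> (\<Sum>l\<in>I. (cmod (a l))\<^sup>2) * (\<Sum>l\<in>I. (cmod (b l))\<^sup>2)"
    by (rule Cauchy_Schwarz_ineq_sum)
  finally show ?thesis .
qed

section \<open>Linearity\<close>

lemma lin_car: "linear_superop d L \<Longrightarrow> A \<in> carrier_mat d d \<Longrightarrow> L A \<in> carrier_mat d d"
  unfolding linear_superop_def by blast

lemma lin_ent: assumes "linear_superop d L" "A \<in> carrier_mat d d" "B \<in> carrier_mat d d" "i < d" "j < d"
  shows "L (c \<cdot>\<^sub>m A + B) $$ (i,j) = c * L A $$ (i,j) + L B $$ (i,j)"
proof -
  have "L (c \<cdot>\<^sub>m A + B) = c \<cdot>\<^sub>m L A + L B" using assms(1-3) unfolding linear_superop_def by blast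
  moreover have "L A \<in> carrier_mat d d" "L B \<in> carrier_mat d d" using assms lin_car by auto
  ultimately show ?thesis using assms(4,5) by simp
qed

lemma lin_zero: assumes "linear_superop d L" "i < d" "j < d"
  shows "L (0\<^sub>m d d) $$ (i,j) = 0"
proof -
  have e: "(1::complex) \<cdot>\<^sub>m 0\<^sub>m d d + 0\<^sub>m d d = 0\<^sub>m d d" by (intro eq_matI) auto
  have "L ((1::complex) \<cdot>\<^sub>m 0\<^sub>m d d + 0\<^sub>m d d) $$ (i,j) = 1 * L (0\<^sub>m d d) $$ (i,j) + L (0\<^sub>m d d) $$ (i,j)"
    by (rule lin_ent[OF assms(1) zero_carrier_mat zero_carrier_mat assms(2,3)])
  hence "L (0\<^sub>m d d) $$ (i,j) = L (0\<^sub>m d d) $$ (i,j) + L (0\<^sub>m d d) $$ (i,j)"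
    by (simp only: e mult_1)
  thus ?thesis by simp
qed

lemma lin_add: assumes "linear_superop d L" "A \<in> carrier_mat d d" "B \<in> carrier_mat d d" "i < d" "j < d"
  shows "L (A + B) $$ (i,j) = L A $$ (i,j) + L B $$ (i,j)"
proof -
  have e: "(1::complex) \<cdot>\<^sub>m A + B = A + B" using assms by (intro eq_matI) auto
  have "L ((1::complex) \<cdot>\<^sub>m A + B) $$ (i,j) = 1 * L A $$ (i,j) + L B $$ (i,j)"
    by (rule lin_ent[OF assms])
  thus ?thesis by (simp only: e mult_1)
qed

lemma lin_smult: assumes "linear_superop d L" "A \<in> carrier_mat d d" "i < d" "j < d"
  shows "L (c \<cdot>\<^sub>m A) $$ (i,j) = c * L A $$ (i,j)"
proof -
  have e: "c \<cdot>\<^sub>m A + 0\<^sub>m d d = c \<cdot>\<^sub>m A" using assms by (intro eq_matI) auto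
  have "L (c \<cdot>\<^sub>m A + 0\<^sub>m d d) $$ (i,j) = c * L A $$ (i,j) + L (0\<^sub>m d d) $$ (i,j)"
    by (rule lin_ent[OF assms(1,2) zero_carrier_mat assms(3,4)])
  thus ?thesis by (simp only: e lin_zero[OF assms(1,3,4)] add_0_right)
qed

lemma lin_comp: assumes "linear_superop d L" "linear_superop d M"
  shows "linear_superop d (L \<circ> M)"
  unfolding linear_superop_def
proof (intro conjI ballI allI)
  fix A :: "complex mat" assume A: "A \<in> carrier_mat d d"
  show "(L \<circ> M) A \<in> carrier_mat d d" using lin_car[OF assms(1) lin_car[OF assms(2) A]] by simp
next
  fix A B :: "complex mat" and c :: complex assume A: "A \<in> carrier_mat d d" and B: "B \<in> carrier_mat d d"
  have "M (c \<cdot>\<^sub>m A + B) = c \<cdot>\<^sub>m M A + M B" using assms(2) A B unfolding linear_superop_def by blast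
  hence "(L \<circ> M) (c \<cdot>\<^sub>m A + B) = L (c \<cdot>\<^sub>m M A + M B)" by simp
  also have "\<dots> = c \<cdot>\<^sub>m L (M A) + L (M B)"
    using assms(1) lin_car[OF assms(2) A] lin_car[OF assms(2) B] unfolding linear_superop_def by blast
  finally show "(L \<circ> M) (c \<cdot>\<^sub>m A + B) = c \<cdot>\<^sub>m (L \<circ> M) A + (L \<circ> M) B" by simp
qed

lemma lin_id: "linear_superop d id"
  unfolding linear_superop_def id_def by simp

lemma lin_pow: assumes "linear_superop d L" shows "linear_superop d (L ^^ k)"
proof (induction k)
  case 0 show ?case using lin_id[of d] by (simp add: id_def)
next
  case (Suc k) show ?case using lin_comp[OF assms Suc] by (simp only: funpow.simps)
qed

lemma coeff: assumes L: "linear_superop d L" and X: "X \<in> carrier_mat d d" and ij: "i < d" "j < d"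
  shows "L X $$ (i,j) = (\<Sum>l<d*d. ent d X l * L (Em d (l div d) (l mod d)) $$ (i,j))"
proof -
  define P where "P m = mat d d (\<lambda>(a,b). if a*d+b < m then X $$ (a,b) else 0)" for m
  have P_car: "P m \<in> carrier_mat d d" for m unfolding P_def by simp
  have step: "m \<le> d*d \<Longrightarrow> L (P m) $$ (i,j) = (\<Sum>l<m. ent d X l * L (Em d (l div d) (l mod d)) $$ (i,j))" for m
  proof (induction m)
    case 0
    have "P 0 = 0\<^sub>m d d" unfolding P_def by (intro eq_matI) auto
    thus ?case using lin_zero[OF L ij] by simp
  next
    case (Suc m)
    hence m: "m < d*d" by simp
    have E: "P (Suc m) = ent d X m \<cdot>\<^sub>m Em d (m div d) (m mod d) + P m"
    proof (intro eq_matI)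
      fix a b assume ab: "a < dim_row (ent d X m \<cdot>\<^sub>m Em d (m div d) (m mod d) + P m)"
        "b < dim_col (ent d X m \<cdot>\<^sub>m Em d (m div d) (m mod d) + P m)"
      hence ab': "a < d" "b < d" by (auto simp: P_def)
      have K: "(a*d+b = m) = (a = m div d \<and> b = m mod d)"
      proof
        assume "a*d+b = m" thus "a = m div d \<and> b = m mod d" using idx2[OF ab'] by auto
      next
        assume "a = m div d \<and> b = m mod d" thus "a*d+b = m" by simp
      qed
      have R: "(ent d X m \<cdot>\<^sub>m Em d (m div d) (m mod d) + P m) $$ (a,b)
          = ent d X m * (if a = m div d \<and> b = m mod d then 1 else 0) + (if a*d+b < m then X $$ (a,b) else 0)"
        using ab' by (simp add: P_def Em_def)
      have Lh: "P (Suc m) $$ (a,b) = (if a*d+b < Suc m then X $$ (a,b) else 0)"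
        using ab' by (simp add: P_def)
      show "P (Suc m) $$ (a,b) = (ent d X m \<cdot>\<^sub>m Em d (m div d) (m mod d) + P m) $$ (a,b)"
      proof (cases "a*d+b = m")
        case True
        hence ab2: "a = m div d" "b = m mod d" using K by auto
        have "a*d+b < Suc m" using True by simp
        moreover have "\<not> a*d+b < m" using True by simp
        ultimately show ?thesis unfolding R Lh using ab2 by (simp add: ent_def)
      next
        case False
        hence nc: "(a = m div d \<and> b = m mod d) = False" using K by auto
        have "(a*d+b < Suc m) = (a*d+b < m)" using False by auto
        thus ?thesis unfolding R Lh nc by simp
      qed
    qed (simp_all add: P_def Em_def)
    have Ecar: "Em d (m div d) (m mod d) \<in> carrier_mat d d" unfolding Em_def by simp
    show ?case unfolding E lin_ent[OF L Ecar P_car ij] using Suc by simp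
  qed
  have "P (d*d) = X"
  proof (intro eq_matI)
    fix a b assume "a < dim_row X" "b < dim_col X"
    hence ab: "a < d" "b < d" using X by auto
    hence "a*d+b < d*d" using idx2[OF ab] by simp
    thus "P (d*d) $$ (a,b) = X $$ (a,b)" using ab by (simp add: P_def)
  qed (use X in \<open>simp_all add: P_def\<close>)
  thus ?thesis using step[of "d*d"] by simp
qed

section \<open>Hilbert-Schmidt\<close>

lemma hs_ctrace: assumes "A \<in> carrier_mat d d" "B \<in> carrier_mat d d"
  shows "ctrace (cdagger A * B) = hs d A B"
proof -
  have dr: "dim_row (cdagger A * B) = d" using assms by (simp add: cdagger_def)
  have e: "(cdagger A * B) $$ (i,i) = (\<Sum>k<d. cnj (A $$ (k,i)) * B $$ (k,i))" if i: "i < d" for i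
  proof -
    have "(cdagger A * B) $$ (i,i) = row (cdagger A) i \<bullet> col B i"
      using assms i by (simp add: cdagger_def)
    also have "\<dots> = (\<Sum>k<d. cnj (A $$ (k,i)) * B $$ (k,i))"
      unfolding scalar_prod_def using assms i by (simp add: cdagger_def atLeast0LessThan)
    finally show ?thesis .
  qed
  have "ctrace (cdagger A * B) = (\<Sum>i<d. \<Sum>k<d. cnj (A $$ (k,i)) * B $$ (k,i))"
    unfolding ctrace_def dr using e by simp
  also have "\<dots> = (\<Sum>k<d. \<Sum>i<d. cnj (A $$ (k,i)) * B $$ (k,i))" by (rule sum.swap)
  also have "\<dots> = hs d A B" unfolding hs_def ent_def by (rule dsum)
  finally show ?thesis .
qed

lemma ent_Em: "l < d*d \<Longrightarrow> i < d \<Longrightarrow> j < d \<Longrightarrow> ent d (Em d i j) l = (if l = i*d+j then 1 else 0)"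
  unfolding ent_def Em_def using idx[of l d] idx2[of i d j]
  by auto

lemma hs_Em: assumes "i < d" "j < d" shows "hs d (Em d i j) Z = Z $$ (i,j)"
proof -
  have "hs d (Em d i j) Z = (\<Sum>l<d*d. if l = i*d+j then ent d Z l else 0)"
    unfolding hs_def by (intro sum.cong) (auto simp: ent_Em assms)
  also have "\<dots> = ent d Z (i*d+j)" using idx2[OF assms] by simp
  also have "\<dots> = Z $$ (i,j)" unfolding ent_def using idx2[OF assms] by simp
  finally show ?thesis .
qed

lemma hs_lin2: assumes "B \<in> carrier_mat d d" "C \<in> carrier_mat d d"
  shows "hs d A (c \<cdot>\<^sub>m B + C) = c * hs d A B + hs d A C"
  unfolding hs_def sum_distrib_left sum.distrib[symmetric]
  using assms idx by (intro sum.cong) (auto simp: ent_def algebra_simps)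

lemma hs_cnj: "hs d A B = cnj (hs d B A)"
  unfolding hs_def cnj_sum by (simp add: mult.commute)

lemma hs_self: "hs d A A = complex_of_real (hn d A)"
  unfolding hs_def hn_def of_real_sum
  by (intro sum.cong) (simp_all only: complex_norm_square mult.commute)

lemma hn_nonneg: "hn d A \<ge> 0" unfolding hn_def by (intro sum_nonneg) auto

lemma hs_cs: "(cmod (hs d A B))\<^sup>2 \<le> hn d A * hn d B"
  unfolding hs_def hn_def using cs[of "\<lambda>l. cnj (ent d A l)" "\<lambda>l. ent d B l" "{..<d*d}"] by simp

lemma ent_le_hn: assumes "i < d" "j < d" shows "(cmod (A $$ (i,j)))\<^sup>2 \<le> hn d A"
proof -
  have "(cmod (ent d A (i*d+j)))\<^sup>2 \<le> hn d A"
    unfolding hn_def by (rule member_le_sum) (use idx2[OF assms] in auto)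
  thus ?thesis unfolding ent_def using idx2[OF assms] by simp
qed

lemma hs_one: assumes "Z \<in> carrier_mat d d" shows "hs d (1\<^sub>m d) Z = ctrace Z"
proof -
  have "hs d (1\<^sub>m d) Z = (\<Sum>i<d. \<Sum>j<d. cnj (1\<^sub>m d $$ (i,j)) * Z $$ (i,j))"
    unfolding hs_def ent_def by (rule dsum[symmetric])
  also have "\<dots> = (\<Sum>i<d. Z $$ (i,i))"
  proof (intro sum.cong refl)
    fix x assume x: "x \<in> {..<d}"
    have "(\<Sum>j<d. cnj (1\<^sub>m d $$ (x,j)) * Z $$ (x,j)) = (\<Sum>j<d. if x = j then Z $$ (x,j) else 0)"
      using x by (intro sum.cong) auto
    thus "(\<Sum>j<d. cnj (1\<^sub>m d $$ (x,j)) * Z $$ (x,j)) = Z $$ (x,x)" using x by simp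
  qed
  finally show ?thesis using assms unfolding ctrace_def by simp
qed

lemma tr_dl: assumes "X \<in> carrier_mat d d" shows "(\<Sum>l<d*d. ent d X l * dl d l) = ctrace X"
proof -
  have "(\<Sum>l<d*d. ent d X l * dl d l) = (\<Sum>i<d. \<Sum>j<d. X $$ (i,j) * (if i = j then 1 else 0))"
    unfolding ent_def dl_def by (rule dsum[symmetric])
  also have "\<dots> = (\<Sum>i<d. X $$ (i,i))"
  proof (intro sum.cong refl)
    fix x assume x: "x \<in> {..<d}"
    have "(\<Sum>j<d. X $$ (x,j) * (if x = j then 1 else 0)) = (\<Sum>j<d. if x = j then X $$ (x,j) else 0)"
      by (intro sum.cong) auto
    thus "(\<Sum>j<d. X $$ (x,j) * (if x = j then 1 else 0)) = X $$ (x,x)" using x by simp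
  qed
  finally show ?thesis using assms unfolding ctrace_def by simp
qed

section \<open>Adjoints\<close>

lemma ent_tend: assumes "i < d" "j < d" "(\<lambda>k. hn d (A k)) \<longlonglongrightarrow> 0"
  shows "(\<lambda>k. A k $$ (i,j)) \<longlonglongrightarrow> 0"
proof -
  have "(\<lambda>k. norm (A k $$ (i,j))) \<longlonglongrightarrow> 0"
  proof (rule tendsto_sandwich[of "\<lambda>_. 0" _ _ "\<lambda>k. sqrt (hn d (A k))"])
    show "\<forall>\<^sub>F k in sequentially. 0 \<le> norm (A k $$ (i,j))" by simp
    show "\<forall>\<^sub>F k in sequentially. norm (A k $$ (i,j)) \<le> sqrt (hn d (A k))"
      using ent_le_hn[OF assms(1,2)] by (intro always_eventually allI real_le_rsqrt) simp
    show "(\<lambda>k. sqrt (hn d (A k))) \<longlonglongrightarrow> 0"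
      using tendsto_real_sqrt[OF assms(3)] by simp
  qed simp
  thus ?thesis by (rule tendsto_norm_zero_cancel)
qed

lemma pow_car: fixes L :: "complex mat \<Rightarrow> complex mat"
  assumes "\<And>A. A \<in> carrier_mat d d \<Longrightarrow> L A \<in> carrier_mat d d" "A \<in> carrier_mat d d"
  shows "(L ^^ n) A \<in> carrier_mat d d"
proof (induction n)
  case 0 show ?case using assms(2) by simp
next
  case (Suc n) show ?case using assms(1)[OF Suc] by simp
qed

lemma pow_fix: "L X = X \<Longrightarrow> (L ^^ n) X = X"
  by (induction n) auto

lemma tp_pow: assumes "\<And>A. A \<in> carrier_mat d d \<Longrightarrow> L A \<in> carrier_mat d d"
  "\<And>A. A \<in> carrier_mat d d \<Longrightarrow> ctrace (L A) = ctrace A" "A \<in> carrier_mat d d"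
  shows "ctrace ((L ^^ n) A) = ctrace A"
proof (induction n)
  case (Suc n)
  have "ctrace ((L ^^ Suc n) A) = ctrace (L ((L ^^ n) A))" by simp
  also have "\<dots> = ctrace ((L ^^ n) A)" using assms(2) pow_car[of d L, OF assms(1) assms(3)] by blast
  finally show ?case using Suc by simp
qed simp

context
  fixes d :: nat and T Tadj :: "complex mat \<Rightarrow> complex mat"
  assumes adj: "is_hs_adjoint d T Tadj" and linT: "linear_superop d T"
begin

lemma Tcar: "A \<in> carrier_mat d d \<Longrightarrow> T A \<in> carrier_mat d d"
  using linT unfolding linear_superop_def by blast

lemma Tadj_car: "A \<in> carrier_mat d d \<Longrightarrow> Tadj A \<in> carrier_mat d d"
  using adj unfolding is_hs_adjoint_def by blast

lemma adj1: assumes "A \<in> carrier_mat d d" "B \<in> carrier_mat d d"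
  shows "hs d A (T B) = hs d (Tadj A) B"
proof -
  have "ctrace (cdagger A * T B) = ctrace (cdagger (Tadj A) * B)"
    using adj assms unfolding is_hs_adjoint_def by blast
  thus ?thesis using hs_ctrace assms Tcar Tadj_car by metis
qed

lemma adj2: assumes "A \<in> carrier_mat d d" "B \<in> carrier_mat d d"
  shows "hs d A (Tadj B) = hs d (T A) B"
proof -
  have "hs d A (Tadj B) = cnj (hs d (Tadj B) A)" by (rule hs_cnj)
  also have "\<dots> = cnj (hs d B (T A))" using adj1[OF assms(2,1)] by simp
  also have "\<dots> = hs d (T A) B" using hs_cnj[of d "T A" B] by simp
  finally show ?thesis .
qed

lemma adjn1: assumes "A \<in> carrier_mat d d" "B \<in> carrier_mat d d"
  shows "hs d A ((T ^^ n) B) = hs d ((Tadj ^^ n) A) B"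
  using assms(1)
proof (induction n arbitrary: A)
  case (Suc n)
  have "hs d A ((T ^^ Suc n) B) = hs d A (T ((T ^^ n) B))" by simp
  also have "\<dots> = hs d (Tadj A) ((T ^^ n) B)"
    using adj1[OF Suc.prems pow_car[of d T, OF Tcar assms(2)]] .
  also have "\<dots> = hs d ((Tadj ^^ n) (Tadj A)) B" using Suc.IH[OF Tadj_car[OF Suc.prems]] .
  also have "(Tadj ^^ n) (Tadj A) = (Tadj ^^ Suc n) A" by (simp add: funpow_Suc_right del: funpow.simps)
  finally show ?case .
qed simp

lemma adjn2: assumes "A \<in> carrier_mat d d" "B \<in> carrier_mat d d"
  shows "hs d A ((Tadj ^^ n) B) = hs d ((T ^^ n) A) B"
proof -
  have "hs d A ((Tadj ^^ n) B) = cnj (hs d ((Tadj ^^ n) B) A)" by (rule hs_cnj)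
  also have "\<dots> = cnj (hs d B ((T ^^ n) A))" using adjn1[OF assms(2,1)] by simp
  also have "\<dots> = hs d ((T ^^ n) A) B" using hs_cnj[of d "(T ^^ n) A" B] by simp
  finally show ?thesis .
qed

lemma Tadj_ent: assumes "Z \<in> carrier_mat d d" "i < d" "j < d"
  shows "Tadj Z $$ (i,j) = hs d (T (Em d i j)) Z"
proof -
  have "Tadj Z $$ (i,j) = hs d (Em d i j) (Tadj Z)" using hs_Em[OF assms(2,3)] by simp
  also have "\<dots> = hs d (T (Em d i j)) Z" using adj2[OF _ assms(1)] by (simp add: Em_def)
  finally show ?thesis .
qed

lemma Tadj_lin: "linear_superop d Tadj"
  unfolding linear_superop_def
proof (intro conjI ballI allI)
  fix A :: "complex mat" assume "A \<in> carrier_mat d d" thus "Tadj A \<in> carrier_mat d d" by (rule Tadj_car)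
next
  fix A B :: "complex mat" and c :: complex assume A: "A \<in> carrier_mat d d" and B: "B \<in> carrier_mat d d"
  have cAB: "c \<cdot>\<^sub>m A + B \<in> carrier_mat d d" using A B by simp
  show "Tadj (c \<cdot>\<^sub>m A + B) = c \<cdot>\<^sub>m Tadj A + Tadj B"
  proof (rule eq_matI)
    fix i j assume "i < dim_row (c \<cdot>\<^sub>m Tadj A + Tadj B)" "j < dim_col (c \<cdot>\<^sub>m Tadj A + Tadj B)"
    hence ij: "i < d" "j < d" using Tadj_car[OF B] by auto
    have "Tadj (c \<cdot>\<^sub>m A + B) $$ (i,j) = hs d (T (Em d i j)) (c \<cdot>\<^sub>m A + B)"
      by (rule Tadj_ent[OF cAB ij])
    also have "\<dots> = c * hs d (T (Em d i j)) A + hs d (T (Em d i j)) B" by (rule hs_lin2[OF A B])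
    also have "\<dots> = c * Tadj A $$ (i,j) + Tadj B $$ (i,j)" using Tadj_ent[OF A ij] Tadj_ent[OF B ij] by simp
    also have "\<dots> = (c \<cdot>\<^sub>m Tadj A + Tadj B) $$ (i,j)" using Tadj_car[OF A] Tadj_car[OF B] ij by simp
    finally show "Tadj (c \<cdot>\<^sub>m A + B) $$ (i,j) = (c \<cdot>\<^sub>m Tadj A + Tadj B) $$ (i,j)" .
  qed (use Tadj_car[OF cAB] Tadj_car[OF A] Tadj_car[OF B] in auto)
qed

lemma Tadj_tp: assumes "T (1\<^sub>m d) = 1\<^sub>m d" "A \<in> carrier_mat d d"
  shows "ctrace (Tadj A) = ctrace A"
proof -
  have "ctrace (Tadj A) = hs d (1\<^sub>m d) (Tadj A)" using hs_one[OF Tadj_car[OF assms(2)]] by simp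
  also have "\<dots> = hs d (T (1\<^sub>m d)) A" using adj2[OF one_carrier_mat assms(2)] .
  also have "\<dots> = ctrace A" using assms hs_one by simp
  finally show ?thesis .
qed

lemma S_selfadj: assumes "A \<in> carrier_mat d d" "B \<in> carrier_mat d d"
  shows "hs d A ((Tadj ^^ n) ((T ^^ n) B)) = hs d ((Tadj ^^ n) ((T ^^ n) A)) B"
proof -
  have TB: "(T ^^ n) B \<in> carrier_mat d d" "(T ^^ n) A \<in> carrier_mat d d"
    using pow_car[of d T] Tcar assms by auto
  have "hs d A ((Tadj ^^ n) ((T ^^ n) B)) = hs d ((T ^^ n) A) ((T ^^ n) B)" using adjn2[OF assms(1) TB(1)] .
  also have "\<dots> = hs d ((Tadj ^^ n) ((T ^^ n) A)) B" using adjn1[OF TB(2) assms(2)] .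
  finally show ?thesis .
qed

end

definition pure :: "nat \<Rightarrow> (nat \<Rightarrow> complex) \<Rightarrow> complex mat" where
  "pure d v = mat d d (\<lambda>(i,j). v i * cnj (v j))"

lemma pure_car: "pure d v \<in> carrier_mat d d" unfolding pure_def by simp

lemma pure_density: assumes "(\<Sum>i<d. v i * cnj (v i)) = 1" shows "density d (pure d v)"
proof -
  have herm: "cdagger (pure d v) = pure d v"
    unfolding cdagger_def pure_def by (intro eq_matI) (auto simp: mult.commute)
  have quad: "Re (\<Sum>i<d. \<Sum>j<d. cnj (w i) * pure d v $$ (i,j) * w j) \<ge> 0" for w :: "nat \<Rightarrow> complex"
  proof -
    define z where "z = (\<Sum>i<d. cnj (w i) * v i)"
    have "(\<Sum>i<d. \<Sum>j<d. cnj (w i) * pure d v $$ (i,j) * w j) = (\<Sum>i<d. \<Sum>j<d. (cnj (w i) * v i) * (cnj (v j) * w j))"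
      unfolding pure_def by (intro sum.cong refl) (simp add: ac_simps)
    also have "\<dots> = z * cnj z" unfolding z_def cnj_sum sum_product by (simp add: ac_simps)
    also have "\<dots> = complex_of_real ((cmod z)\<^sup>2)" by (rule complex_norm_square[symmetric])
    finally have "(\<Sum>i<d. \<Sum>j<d. cnj (w i) * pure d v $$ (i,j) * w j) = complex_of_real ((cmod z)\<^sup>2)" .
    hence "Re (\<Sum>i<d. \<Sum>j<d. cnj (w i) * pure d v $$ (i,j) * w j) = (cmod z)\<^sup>2"
      by (simp only: Re_complex_of_real)
    thus ?thesis by simp
  qed
  have tr: "ctrace (pure d v) = 1" unfolding ctrace_def pure_def using assms by simp
  show ?thesis unfolding density_def psd_def using herm quad tr pure_car by blast
qed

lemma sum2: fixes a b d :: nat assumes "a \<noteq> b" "a < d" "b < d"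
  shows "(\<Sum>t<d. if t = a then x else if t = b then y else 0) = x + (y::complex)"
proof -
  have "(\<Sum>t<d. if t = a then x else if t = b then y else 0) = (\<Sum>t<d. (if t = a then x else 0) + (if t = b then y else 0))"
    using assms(1) by (intro sum.cong) auto
  also have "\<dots> = (\<Sum>t<d. if t = a then x else 0) + (\<Sum>t<d. if t = b then y else 0)"
    by (rule sum.distrib)
  also have "(\<Sum>t<d. if t = a then x else 0) = x" using assms(2) by (subst sum.delta) auto
  also have "(\<Sum>t<d. if t = b then y else 0) = y" using assms(3) by (subst sum.delta) auto
  finally show ?thesis .
qed

section \<open>Primitivity via matrix units\<close>

definition ind :: "nat \<Rightarrow> nat \<Rightarrow> complex" where "ind a t = (if t = a then 1 else 0)"

lemma cnj_ind[simp]: "cnj (ind a t) = ind a t" unfolding ind_def by simp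

lemma Em_car: "Em d a b \<in> carrier_mat d d" unfolding Em_def by simp

lemma Em_dim[simp]: "dim_row (Em d a b) = d" "dim_col (Em d a b) = d" unfolding Em_def by simp_all

lemma Em_pure: "Em d a a = pure d (ind a)"
  unfolding Em_def pure_def ind_def by (intro eq_matI) auto

lemma ind_sum: assumes "a < d" shows "(\<Sum>t<d. ind a t * cnj (ind a t)) = 1"
proof -
  have "(\<Sum>t<d. ind a t * cnj (ind a t)) = (\<Sum>t<d. if t = a then 1 else 0)"
    unfolding ind_def by (intro sum.cong) auto
  also have "\<dots> = 1" using assms by (subst sum.delta) auto
  finally show ?thesis .
qed

lemma alg_id0: fixes s c ii ai bi aj bj :: complex
  assumes h1: "2 * (s * s) = 1" and h2: "2 * c = - (1 + ii)" and h3: "ii * ii = - 1"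
  shows "s * (ai + bi) * (s * (aj + bj)) +
        (ii * (s * (ai + ii * bi) * (s * (aj - ii * bj))) +
         (c * (ai * aj) + c * (bi * bj))) = ai * bj" (is "?L = _")
proof -
  define Q where "Q = ai * aj + bi * bj"
  have e1: "?L = (s*s) * ((ai + bi) * (aj + bj) + ii * ((ai + ii * bi) * (aj - ii * bj))) + c * Q"
    unfolding Q_def by (simp add: algebra_simps)
  have e2: "(ai + bi) * (aj + bj) + ii * ((ai + ii * bi) * (aj - ii * bj))
      = (1 + ii) * Q + 2 * ai * bj + (ii * ii + 1) * (bi * aj - ai * bj - ii * bi * bj)"
    unfolding Q_def by (simp add: algebra_simps)
  have e3: "ii * ii + 1 = 0" using h3 by simp
  have "2 * ?L = (2 * (s * s)) * ((1 + ii) * Q + 2 * ai * bj) + (2 * c) * Q"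
    unfolding e1 e2 e3 by (simp add: algebra_simps)
  also have "\<dots> = 2 * (ai * bj)" unfolding h1 h2 by (simp add: algebra_simps)
  finally have fin: "2 * ?L = 2 * (ai * bj)" .
  have two: "(2::complex) \<noteq> 0" by simp
  show ?thesis using fin mult_left_cancel[OF two] by blast
qed

lemma alg_id: "2 * (s * s) = 1 \<Longrightarrow> 2 * c = - (1 + \<i>) \<Longrightarrow> \<i> * \<i> = - 1 \<Longrightarrow> s * (ai + bi) * (s * (aj + bj)) +
        (\<i> * (s * (ai + \<i> * bi) * (s * (aj - \<i> * bj))) +
         (c * (ai * aj) + c * (bi * bj))) =
        ai * (bj::complex)"
  by (rule alg_id0)

lemma E_decomp:
  fixes s c :: complex
  assumes hs: "2 * (s * s) = 1" and hcs: "cnj s = s" and hc: "2 * c = - (1 + \<i>)"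
  shows "Em d a b = pure d (\<lambda>t. s * (ind a t + ind b t)) +
     (\<i> \<cdot>\<^sub>m pure d (\<lambda>t. s * (ind a t + \<i> * ind b t)) + (c \<cdot>\<^sub>m Em d a a + c \<cdot>\<^sub>m Em d b b))"
proof (rule eq_matI)
  fix i j assume ij: "i < dim_row (pure d (\<lambda>t. s * (ind a t + ind b t)) +
     (\<i> \<cdot>\<^sub>m pure d (\<lambda>t. s * (ind a t + \<i> * ind b t)) + (c \<cdot>\<^sub>m Em d a a + c \<cdot>\<^sub>m Em d b b)))"
    "j < dim_col (pure d (\<lambda>t. s * (ind a t + ind b t)) +
     (\<i> \<cdot>\<^sub>m pure d (\<lambda>t. s * (ind a t + \<i> * ind b t)) + (c \<cdot>\<^sub>m Em d a a + c \<cdot>\<^sub>m Em d b b)))"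
  hence ij': "i < d" "j < d" by (auto simp: pure_def Em_def)
  have em: "Em d x y $$ (i,j) = ind x i * ind y j" for x y
    unfolding Em_def ind_def using ij' by simp
  have R: "(pure d (\<lambda>t. s * (ind a t + ind b t)) +
     (\<i> \<cdot>\<^sub>m pure d (\<lambda>t. s * (ind a t + \<i> * ind b t)) + (c \<cdot>\<^sub>m Em d a a + c \<cdot>\<^sub>m Em d b b))) $$ (i,j)
    = s * (ind a i + ind b i) * (s * (ind a j + ind b j)) +
      (\<i> * (s * (ind a i + \<i> * ind b i) * (s * (ind a j - \<i> * ind b j))) +
      (c * (ind a i * ind a j) + c * (ind b i * ind b j)))"
    using ij' by (simp add: pure_def em Em_car hcs)
  have "s * (ind a i + ind b i) * (s * (ind a j + ind b j)) +
      (\<i> * (s * (ind a i + \<i> * ind b i) * (s * (ind a j - \<i> * ind b j))) +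
      (c * (ind a i * ind a j) + c * (ind b i * ind b j))) = ind a i * ind b j"
  proof -
    have i2: "\<i> * \<i> = -1" by simp
    show ?thesis by (rule alg_id[OF hs hc i2])
  qed
  thus "Em d a b $$ (i,j) = (pure d (\<lambda>t. s * (ind a t + ind b t)) +
     (\<i> \<cdot>\<^sub>m pure d (\<lambda>t. s * (ind a t + \<i> * ind b t)) + (c \<cdot>\<^sub>m Em d a a + c \<cdot>\<^sub>m Em d b b))) $$ (i,j)"
    using R em by simp
qed (auto simp: Em_def pure_def)

lemma two_dens:
  fixes s :: complex
  assumes hs: "2 * (s * s) = 1" and hcs: "cnj s = s" and ab: "a \<noteq> b" "a < d" "b < d"
  shows "density d (pure d (\<lambda>t. s * (ind a t + ind b t)))"
    "density d (pure d (\<lambda>t. s * (ind a t + \<i> * ind b t)))"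
proof -
  have "(\<Sum>t<d. s * (ind a t + ind b t) * cnj (s * (ind a t + ind b t))) =
     (\<Sum>t<d. if t = a then 1/2 else if t = b then 1/2 else 0)"
  proof (intro sum.cong refl)
    fix t
    have "s * s = 1/2" using hs by (simp add: field_simps)
    thus "s * (ind a t + ind b t) * cnj (s * (ind a t + ind b t)) = (if t = a then 1/2 else if t = b then 1/2 else 0)"
      using ab hcs unfolding ind_def by (auto simp: algebra_simps)
  qed
  also have "\<dots> = 1" using sum2[OF ab] by simp
  finally show "density d (pure d (\<lambda>t. s * (ind a t + ind b t)))" by (rule pure_density)
  have "(\<Sum>t<d. s * (ind a t + \<i> * ind b t) * cnj (s * (ind a t + \<i> * ind b t))) =
     (\<Sum>t<d. if t = a then 1/2 else if t = b then 1/2 else 0)"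
  proof (intro sum.cong refl)
    fix t
    have h2: "s * cnj s = 1/2" using hs hcs by (simp add: field_simps)
    have nq: "x * cnj x = complex_of_real ((cmod x)\<^sup>2)" for x by (rule complex_norm_square[symmetric])
    have cs2: "complex_of_real ((cmod s)\<^sup>2) = 1/2" using h2 nq[of s] by simp
    have "cmod (s * (ind a t + \<i> * ind b t)) = (if t = a then cmod s else if t = b then cmod s else 0)"
      using ab unfolding ind_def by (auto simp: norm_mult)
    thus "s * (ind a t + \<i> * ind b t) * cnj (s * (ind a t + \<i> * ind b t)) = (if t = a then 1/2 else if t = b then 1/2 else 0)"
      unfolding nq using cs2 by auto
  qed
  also have "\<dots> = 1" using sum2[OF ab] by simp
  finally show "density d (pure d (\<lambda>t. s * (ind a t + \<i> * ind b t)))" by (rule pure_density)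
qed

abbreviation basis_conv :: "nat \<Rightarrow> (complex mat \<Rightarrow> complex mat) \<Rightarrow> bool" where
  "basis_conv d S \<equiv> (\<forall>l<d*d. \<forall>i<d. \<forall>j<d. (\<lambda>k. (S ^^ k) (Em d (l div d) (l mod d)) $$ (i,j))
      \<longlonglongrightarrow> dl d l * (if i = j then 1 / of_nat d else 0))"

lemma prim_iff: assumes S: "linear_superop d S"
  shows "primitive d S \<longleftrightarrow> basis_conv d S"
proof
  assume P: "primitive d S"
  show "basis_conv d S"
  proof (intro allI impI)
    fix l i j assume l: "l < d*d" and ij: "i < d" "j < d"
    define a where "a = l div d"
    define b where "b = l mod d"
    have ab: "a < d" "b < d" using idx[OF l] a_def b_def by auto
    let ?\<delta> = "if i = j then 1 / of_nat d else (0::complex)"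
    have P': "\<And>\<rho> i j. density d \<rho> \<Longrightarrow> i < d \<Longrightarrow> j < d \<Longrightarrow>
       (\<lambda>k. (S ^^ k) \<rho> $$ (i,j)) \<longlonglongrightarrow> (if i = j then 1 / of_nat d else 0)"
      using P unfolding primitive_def by blast
    have dens: "density d \<rho> \<Longrightarrow> (\<lambda>k. (S ^^ k) \<rho> $$ (i,j)) \<longlonglongrightarrow> ?\<delta>" for \<rho>
      using P' ij by simp
    have Eaa: "(\<lambda>k. (S ^^ k) (Em d x x) $$ (i,j)) \<longlonglongrightarrow> ?\<delta>" if x: "x < d" for x
      unfolding Em_pure by (rule dens[OF pure_density[OF ind_sum[OF x]]])
    show "(\<lambda>k. (S ^^ k) (Em d (l div d) (l mod d)) $$ (i,j)) \<longlonglongrightarrow> dl d l * ?\<delta>"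
    proof (cases "a = b")
      case True
      hence "dl d l = 1" unfolding dl_def a_def b_def by simp
      thus ?thesis using Eaa[OF ab(1)] True unfolding a_def b_def by simp
    next
      case False
      hence dl0: "dl d l = 0" unfolding dl_def a_def b_def by simp
      define s where "s = complex_of_real (1 / sqrt 2)"
      have rr: "(1 / sqrt 2) * (1 / sqrt 2) = (1/2 :: real)" by simp
      have "s * s = complex_of_real ((1 / sqrt 2) * (1 / sqrt 2))" unfolding s_def by (simp only: of_real_mult)
      hence ss: "s * s = 1/2" unfolding rr by simp
      have hs: "2 * (s * s) = 1" unfolding ss by simp
      have hcs: "cnj s = s" unfolding s_def by simp
      define c where "c = - (1 + \<i>) / (2::complex)"
      have hc: "2 * c = - (1 + \<i>)" unfolding c_def by simp
      define v where "v = (\<lambda>t. s * (ind a t + ind b t))"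
      define w where "w = (\<lambda>t. s * (ind a t + \<i> * ind b t))"
      have dv: "density d (pure d v)" and dw: "density d (pure d w)"
        using two_dens[OF hs hcs False ab] unfolding v_def w_def by auto
      have dec: "Em d a b = pure d v + (\<i> \<cdot>\<^sub>m pure d w + (c \<cdot>\<^sub>m Em d a a + c \<cdot>\<^sub>m Em d b b))"
        unfolding v_def w_def by (rule E_decomp[OF hs hcs hc])
      have Sk: "linear_superop d (S ^^ k)" for k by (rule lin_pow[OF S])
      have ent: "(S ^^ k) (Em d a b) $$ (i,j) = (S ^^ k) (pure d v) $$ (i,j) + (\<i> * (S ^^ k) (pure d w) $$ (i,j)
          + (c * (S ^^ k) (Em d a a) $$ (i,j) + c * (S ^^ k) (Em d b b) $$ (i,j)))" for k
        unfolding dec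
        by (simp add: lin_add[OF Sk] lin_smult[OF Sk] pure_car Em_car ij)
      have "(\<lambda>k. (S ^^ k) (Em d a b) $$ (i,j)) \<longlonglongrightarrow> ?\<delta> + (\<i> * ?\<delta> + (c * ?\<delta> + c * ?\<delta>))"
        unfolding ent
        by (intro tendsto_add tendsto_mult_left dens dv dw Eaa ab)
      moreover have "?\<delta> + (\<i> * ?\<delta> + (c * ?\<delta> + c * ?\<delta>)) = dl d l * ?\<delta>"
      proof -
        have "?\<delta> + (\<i> * ?\<delta> + (c * ?\<delta> + c * ?\<delta>)) = ?\<delta> * (1 + \<i> + 2 * c)" by (simp add: algebra_simps)
        also have "\<dots> = 0" using hc by simp
        finally show ?thesis using dl0 by simp
      qed
      ultimately show ?thesis unfolding a_def b_def by simp
    qed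
  qed
next
  assume B: "basis_conv d S"
  show "primitive d S" unfolding primitive_def
  proof (intro allI impI)
    fix \<rho> i j assume \<rho>: "density d \<rho>" and ij: "i < d" "j < d"
    have car: "\<rho> \<in> carrier_mat d d" and tr: "ctrace \<rho> = 1"
      using \<rho> unfolding density_def psd_def by auto
    let ?\<delta> = "if i = j then 1 / of_nat d else (0::complex)"
    have e: "(S ^^ k) \<rho> $$ (i,j) = (\<Sum>l<d*d. ent d \<rho> l * (S ^^ k) (Em d (l div d) (l mod d)) $$ (i,j))" for k
      by (rule coeff[OF lin_pow[OF S] car ij])
    have "(\<lambda>k. \<Sum>l<d*d. ent d \<rho> l * (S ^^ k) (Em d (l div d) (l mod d)) $$ (i,j))
        \<longlonglongrightarrow> (\<Sum>l<d*d. ent d \<rho> l * (dl d l * ?\<delta>))"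
    proof (intro tendsto_sum tendsto_mult_left)
      fix l assume "l \<in> {..<d*d}"
      hence "l < d*d" by simp
      thus "(\<lambda>k. (S ^^ k) (Em d (l div d) (l mod d)) $$ (i,j)) \<longlonglongrightarrow> dl d l * ?\<delta>"
        using B ij by blast
    qed
    moreover have "(\<Sum>l<d*d. ent d \<rho> l * (dl d l * ?\<delta>)) = ctrace \<rho> * ?\<delta>"
      unfolding tr_dl[OF car, symmetric] sum_distrib_right by (simp add: ac_simps)
    ultimately show "(\<lambda>k. (S ^^ k) \<rho> $$ (i,j)) \<longlonglongrightarrow> ?\<delta>" unfolding e tr by simp
  qed
qed

lemma unif: assumes S: "linear_superop d S" and B: "basis_conv d S"
  shows "\<exists>e. e \<longlonglongrightarrow> 0 \<and> (\<forall>k X. X \<in> carrier_mat d d \<longrightarrow> ctrace X = 0 \<longrightarrow> hn d ((S ^^ k) X) \<le> e k * hn d X)"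
proof -
  define dd where "dd m = (if m div d = m mod d then 1 / of_nat d else (0::complex))" for m
  define g where "g k l m = (S ^^ k) (Em d (l div d) (l mod d)) $$ (m div d, m mod d) - dl d l * dd m" for k l m
  define e where "e k = (\<Sum>m<d*d. \<Sum>l<d*d. (cmod (g k l m))\<^sup>2)" for k
  have gt: "(\<lambda>k. g k l m) \<longlonglongrightarrow> 0" if "l < d*d" "m < d*d" for l m
  proof -
    have Bl: "\<And>l i j. l < d*d \<Longrightarrow> i < d \<Longrightarrow> j < d \<Longrightarrow> (\<lambda>k. (S ^^ k) (Em d (l div d) (l mod d)) $$ (i,j))
      \<longlonglongrightarrow> dl d l * (if i = j then 1 / of_nat d else 0)" using B by blast
    have "(\<lambda>k. (S ^^ k) (Em d (l div d) (l mod d)) $$ (m div d, m mod d)) \<longlonglongrightarrow> dl d l * dd m"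
      unfolding dd_def using idx[OF that(2)] by (intro Bl that(1)) auto
    hence "(\<lambda>k. g k l m) \<longlonglongrightarrow> dl d l * dd m - dl d l * dd m"
      unfolding g_def by (intro tendsto_diff) auto
    thus ?thesis by simp
  qed
  have "e \<longlonglongrightarrow> (\<Sum>m<d*d. \<Sum>l<d*d. (0::real))"
    unfolding e_def
  proof (intro tendsto_sum)
    fix m l assume "m \<in> {..<d*d}" "l \<in> {..<d*d}"
    hence "(\<lambda>k. cmod (g k l m)) \<longlonglongrightarrow> 0" using gt tendsto_norm_zero by auto
    from tendsto_power[OF this, of 2] show "(\<lambda>k. (cmod (g k l m))\<^sup>2) \<longlonglongrightarrow> 0" by simp
  qed
  hence e0: "e \<longlonglongrightarrow> 0" by simp
  have bound: "hn d ((S ^^ k) X) \<le> e k * hn d X" if X: "X \<in> carrier_mat d d" "ctrace X = 0" for k X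
  proof -
    have em: "ent d ((S ^^ k) X) m = (\<Sum>l<d*d. ent d X l * g k l m)" if m: "m < d*d" for m
    proof -
      have "ent d ((S ^^ k) X) m = (S ^^ k) X $$ (m div d, m mod d)" by (simp add: ent_def)
      also have "\<dots> = (\<Sum>l<d*d. ent d X l * (S ^^ k) (Em d (l div d) (l mod d)) $$ (m div d, m mod d))"
        by (rule coeff[OF lin_pow[OF S] X(1)]) (use idx[OF m] in auto)
      also have "\<dots> = (\<Sum>l<d*d. ent d X l * g k l m) + (\<Sum>l<d*d. ent d X l * dl d l) * dd m"
        unfolding g_def sum_distrib_right sum.distrib[symmetric] by (intro sum.cong) (auto simp: algebra_simps)
      also have "(\<Sum>l<d*d. ent d X l * dl d l) = 0" using tr_dl[OF X(1)] X(2) by simp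
      finally show ?thesis by simp
    qed
    have "hn d ((S ^^ k) X) = (\<Sum>m<d*d. (cmod (\<Sum>l<d*d. ent d X l * g k l m))\<^sup>2)"
      unfolding hn_def using em by simp
    also have "\<dots> \<le> (\<Sum>m<d*d. hn d X * (\<Sum>l<d*d. (cmod (g k l m))\<^sup>2))"
      unfolding hn_def by (intro sum_mono cs)
    also have "\<dots> = e k * hn d X" unfolding e_def by (simp add: sum_distrib_left ac_simps)
    finally show ?thesis .
  qed
  show ?thesis using e0 bound by blast
qed

lemma basis_from_W: assumes S: "linear_superop d S" and S1: "S (1\<^sub>m d) = 1\<^sub>m d"
  and W: "\<And>X. X \<in> carrier_mat d d \<Longrightarrow> ctrace X = 0 \<Longrightarrow> (\<lambda>k. hn d ((S ^^ k) X)) \<longlonglongrightarrow> 0"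
  shows "basis_conv d S"
proof (intro allI impI)
  fix l i j assume l: "l < d*d" and ij: "i < d" "j < d"
  define a where "a = l div d"
  define b where "b = l mod d"
  have ab: "a < d" "b < d" using idx[OF l] a_def b_def by auto
  have dpos: "d > 0" using ab by simp
  define q where "q = dl d l / of_nat d"
  define Z where "Z = Em d a b + (- q) \<cdot>\<^sub>m 1\<^sub>m d"
  have Zc: "Z \<in> carrier_mat d d" unfolding Z_def Em_def by simp
  have trE: "ctrace (Em d a b) = dl d l"
  proof -
    have "ctrace (Em d a b) = (\<Sum>t<d. if t = a then (if a = b then 1 else 0) else 0)"
      unfolding ctrace_def Em_def by (intro sum.cong) auto
    also have "\<dots> = (if a = b then 1 else 0)" using ab by (subst sum.delta) auto
    finally show ?thesis unfolding dl_def a_def b_def by simp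
  qed
  have trZ: "ctrace Z = 0"
  proof -
    have "ctrace Z = (\<Sum>t<d. Em d a b $$ (t,t)) + (\<Sum>t<d. - q)"
      unfolding ctrace_def Z_def Em_def by (simp add: sum.distrib sum_subtractf)
    also have "(\<Sum>t<d. Em d a b $$ (t,t)) = dl d l" using trE unfolding ctrace_def Em_def by simp
    also have "(\<Sum>t<d. - q) = - dl d l" unfolding q_def using dpos by simp
    finally show ?thesis by simp
  qed
  have dec: "Em d a b = q \<cdot>\<^sub>m 1\<^sub>m d + Z"
    unfolding Z_def Em_def by (intro eq_matI) auto
  have Sk: "linear_superop d (S ^^ k)" for k by (rule lin_pow[OF S])
  have ent: "(S ^^ k) (Em d a b) $$ (i,j) = q * (if i = j then 1 else 0) + (S ^^ k) Z $$ (i,j)" for k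
    unfolding dec lin_ent[OF Sk one_carrier_mat Zc ij] pow_fix[of S, OF S1] using ij by simp
  have "(\<lambda>k. (S ^^ k) (Em d a b) $$ (i,j)) \<longlonglongrightarrow> q * (if i = j then 1 else 0) + 0"
    unfolding ent by (intro tendsto_add tendsto_const ent_tend[OF ij] W Zc trZ)
  moreover have "q * (if i = j then 1 else 0) = dl d l * (if i = j then 1 / of_nat d else 0)"
    unfolding q_def by simp
  ultimately show "(\<lambda>k. (S ^^ k) (Em d (l div d) (l mod d)) $$ (i,j)) \<longlonglongrightarrow> dl d l * (if i = j then 1 / of_nat d else 0)"
    unfolding a_def b_def by simp
qed

lemma pw: fixes S :: "complex mat \<Rightarrow> complex mat"
  assumes car: "\<And>A. A \<in> carrier_mat d d \<Longrightarrow> S A \<in> carrier_mat d d"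
    and sa: "\<And>A B. A \<in> carrier_mat d d \<Longrightarrow> B \<in> carrier_mat d d \<Longrightarrow> hs d A (S B) = hs d (S A) B"
    and X: "X \<in> carrier_mat d d"
  shows "hn d (S X) ^ (2^j) \<le> hn d X ^ (2^j - 1) * hn d ((S ^^ (2^j)) X)"
  using car sa
proof (induction j arbitrary: S)
  case 0 thus ?case by simp
next
  case (Suc j)
  have SX: "S X \<in> carrier_mat d d" using Suc.prems(1) X by blast
  have sq: "hn d (S X) ^ 2 \<le> hn d X * hn d (S (S X))"
  proof -
    have "complex_of_real (hn d (S X)) = hs d (S X) (S X)" by (simp add: hs_self)
    also have "\<dots> = hs d X (S (S X))" using Suc.prems(2)[OF X SX] by simp
    finally have "hn d (S X) = cmod (hs d X (S (S X)))"
      using hn_nonneg by (metis abs_of_nonneg norm_of_real)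
    thus ?thesis using hs_cs by simp
  qed
  define S2 where "S2 = S \<circ> S"
  have car2: "\<And>A. A \<in> carrier_mat d d \<Longrightarrow> S2 A \<in> carrier_mat d d" unfolding S2_def using Suc.prems(1) by simp
  have sa2: "\<And>A B. A \<in> carrier_mat d d \<Longrightarrow> B \<in> carrier_mat d d \<Longrightarrow> hs d A (S2 B) = hs d (S2 A) B"
    unfolding S2_def using Suc.prems by simp
  have IH: "hn d (S2 X) ^ (2^j) \<le> hn d X ^ (2^j - 1) * hn d ((S2 ^^ (2^j)) X)"
    by (rule Suc.IH[OF car2 sa2])
  have pw2: "S2 ^^ (2^j) = S ^^ (2 ^ Suc j)"
  proof -
    have "S2 = S ^^ 2" unfolding S2_def by (simp add: numeral_2_eq_2)
    hence "S2 ^^ (2^j) = S ^^ (2 * 2^j)" by (simp add: funpow_mult)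
    thus ?thesis by simp
  qed
  have "hn d (S X) ^ (2 ^ Suc j) = (hn d (S X) ^ 2) ^ (2^j)" by (simp add: power_mult)
  also have "\<dots> \<le> (hn d X * hn d (S2 X)) ^ (2^j)"
    using sq unfolding S2_def by (intro power_mono) auto
  also have "\<dots> = hn d X ^ (2^j) * hn d (S2 X) ^ (2^j)" by (simp add: power_mult_distrib)
  also have "\<dots> \<le> hn d X ^ (2^j) * (hn d X ^ (2^j - 1) * hn d ((S2 ^^ (2^j)) X))"
    using IH hn_nonneg by (intro mult_left_mono) auto
  also have "\<dots> = hn d X ^ (2^j + (2^j - 1)) * hn d ((S ^^ (2 ^ Suc j)) X)"
    unfolding pw2 power_add by (simp add: mult.assoc)
  also have "2^j + (2^j - 1) = (2 ^ Suc j - 1 :: nat)"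
  proof -
    have p: "(2::nat)^j \<ge> 1" by simp
    have "(2::nat)^Suc j = 2^j + 2^j" by simp
    thus ?thesis using p by linarith
  qed
  finally show ?case .
qed

lemma quad_bound: fixes z y :: real assumes "0 \<le> z" "0 \<le> y" "z^2 \<le> y * z / 4" shows "z \<le> y / 4"
proof (cases "z = 0")
  case True thus ?thesis using assms by simp
next
  case False
  hence "z > 0" using assms by simp
  hence "z * z \<le> (y/4) * z" using assms by (simp add: power2_eq_square)
  thus ?thesis using \<open>z > 0\<close> by simp
qed

lemma div_tendsto: assumes "n > 0" shows "filterlim (\<lambda>k::nat. k div n) at_top sequentially"
  unfolding filterlim_at_top eventually_sequentially
proof
  fix N :: nat
  show "\<exists>K. \<forall>k\<ge>K. N \<le> k div n"
  proof (intro exI allI impI)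
    fix k assume "N * n \<le> k"
    hence "(N * n) div n \<le> k div n" by (rule div_le_mono)
    thus "N \<le> k div n" using assms by simp
  qed
qed

theorem mainTheorem11:
  fixes d :: nat and T Tadj :: "complex mat \<Rightarrow> complex mat"
  assumes "is_hs_adjoint d T Tadj"
    and "doubly_stochastic_channel d T Tadj"
  shows "primitive d T \<longleftrightarrow> (\<exists>n :: nat. primitive d ((Tadj ^^ n) \<circ> (T ^^ n)))"
proof -
  note adj = assms(1)
  have linT: "linear_superop d T" and tpT: "trace_preserving d T"
    and T1: "T (1\<^sub>m d) = 1\<^sub>m d" and A1: "Tadj (1\<^sub>m d) = 1\<^sub>m d"
    using assms(2) unfolding doubly_stochastic_channel_def quantum_channel_def by auto
  have linA: "linear_superop d Tadj" by (rule Tadj_lin[OF adj linT])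
  have Tc: "\<And>A. A \<in> carrier_mat d d \<Longrightarrow> T A \<in> carrier_mat d d" by (rule Tcar[OF adj linT])
  have Ac: "\<And>A. A \<in> carrier_mat d d \<Longrightarrow> Tadj A \<in> carrier_mat d d" by (rule Tadj_car[OF adj linT])
  have Ttr: "\<And>A. A \<in> carrier_mat d d \<Longrightarrow> ctrace (T A) = ctrace A" using tpT unfolding trace_preserving_def by blast
  have Atr: "\<And>A. A \<in> carrier_mat d d \<Longrightarrow> ctrace (Tadj A) = ctrace A" by (rule Tadj_tp[OF adj linT T1])
  have TkW: "(T ^^ k) X \<in> carrier_mat d d \<and> ctrace ((T ^^ k) X) = 0" if "X \<in> carrier_mat d d" "ctrace X = 0" for k X
    using pow_car[of d T, OF Tc that(1)] tp_pow[of d T, OF Tc Ttr that(1)] that(2) by simp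
  have AkW: "(Tadj ^^ k) X \<in> carrier_mat d d \<and> ctrace ((Tadj ^^ k) X) = 0" if "X \<in> carrier_mat d d" "ctrace X = 0" for k X
    using pow_car[of d Tadj, OF Ac that(1)] tp_pow[of d Tadj, OF Ac Atr that(1)] that(2) by simp
  have hnc: "cmod (hs d Z Z) = hn d Z" for Z
    by (simp add: hs_self hn_nonneg)
  show ?thesis
  proof
    assume PT: "primitive d T"
    have "basis_conv d T" using PT prim_iff[OF linT] by simp
    from unif[OF linT this]
    obtain e where e0: "e \<longlonglongrightarrow> 0" and eb: "\<And>k X. X \<in> carrier_mat d d \<Longrightarrow> ctrace X = 0 \<Longrightarrow> hn d ((T ^^ k) X) \<le> e k * hn d X"
      by blast
    have "\<forall>\<^sub>F k in sequentially. e k < 1/4" using e0 by (rule order_tendstoD) simp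
    then obtain n where en: "e n < 1/4" unfolding eventually_sequentially by blast
    have Tn: "hn d ((T ^^ n) X) \<le> hn d X / 4" if "X \<in> carrier_mat d d" "ctrace X = 0" for X
    proof -
      have "hn d ((T ^^ n) X) \<le> e n * hn d X" by (rule eb[OF that])
      also have "\<dots> \<le> (1/4) * hn d X" using en hn_nonneg by (intro mult_right_mono) auto
      finally show ?thesis by simp
    qed
    have An: "hn d ((Tadj ^^ n) Y) \<le> hn d Y / 4" if Y: "Y \<in> carrier_mat d d" "ctrace Y = 0" for Y
    proof -
      define Z where "Z = (Tadj ^^ n) Y"
      have Z: "Z \<in> carrier_mat d d" "ctrace Z = 0" using AkW[OF Y] unfolding Z_def by auto
      have "hs d Z Z = hs d Y ((T ^^ n) Z)" using adjn1[OF adj linT Y(1) Z(1)] unfolding Z_def by simp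
      hence "(hn d Z)^2 = (cmod (hs d Y ((T ^^ n) Z)))^2" using hnc[of Z] by simp
      also have "\<dots> \<le> hn d Y * hn d ((T ^^ n) Z)" by (rule hs_cs)
      also have "\<dots> \<le> hn d Y * (hn d Z / 4)" using Tn[OF Z] hn_nonneg by (intro mult_left_mono) auto
      finally have "(hn d Z)^2 \<le> hn d Y * hn d Z / 4" by simp
      thus ?thesis using quad_bound hn_nonneg unfolding Z_def by blast
    qed
    define S where "S = (Tadj ^^ n) \<circ> (T ^^ n)"
    have linS: "linear_superop d S" unfolding S_def by (intro lin_comp lin_pow linA linT)
    have S1: "S (1\<^sub>m d) = 1\<^sub>m d" unfolding S_def using pow_fix[of T, OF T1] pow_fix[of Tadj, OF A1] by simp
    have SW: "S X \<in> carrier_mat d d \<and> ctrace (S X) = 0 \<and> hn d (S X) \<le> hn d X / 16"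
      if "X \<in> carrier_mat d d" "ctrace X = 0" for X
    proof -
      have a: "(T ^^ n) X \<in> carrier_mat d d" "ctrace ((T ^^ n) X) = 0" using TkW[OF that] by auto
      have "hn d (S X) \<le> hn d ((T ^^ n) X) / 4" unfolding S_def using An[OF a] by simp
      also have "\<dots> \<le> hn d X / 16" using Tn[OF that] by simp
      finally show ?thesis using AkW[OF a] unfolding S_def by simp
    qed
    have Sk: "(S ^^ k) X \<in> carrier_mat d d \<and> ctrace ((S ^^ k) X) = 0 \<and> hn d ((S ^^ k) X) \<le> (1/16)^k * hn d X"
      if "X \<in> carrier_mat d d" "ctrace X = 0" for X k
    proof (induction k)
      case 0 thus ?case using that by simp
    next
      case (Suc k)
      have "hn d ((S ^^ Suc k) X) \<le> hn d ((S ^^ k) X) / 16" using SW[of "(S ^^ k) X"] Suc by simp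
      also have "\<dots> \<le> (1/16)^Suc k * hn d X" using Suc by simp
      finally show ?case using SW[of "(S ^^ k) X"] Suc by simp
    qed
    have "basis_conv d S"
    proof (rule basis_from_W[OF linS S1])
      fix X assume X: "X \<in> carrier_mat d d" "ctrace X = 0"
      show "(\<lambda>k. hn d ((S ^^ k) X)) \<longlonglongrightarrow> 0"
      proof (rule tendsto_sandwich[of "\<lambda>_. 0" _ _ "\<lambda>k. (1/16)^k * hn d X"])
        show "\<forall>\<^sub>F k in sequentially. 0 \<le> hn d ((S ^^ k) X)" by (simp add: hn_nonneg)
        show "\<forall>\<^sub>F k in sequentially. hn d ((S ^^ k) X) \<le> (1/16)^k * hn d X" using Sk[OF X] by simp
        show "(\<lambda>k. (1/16::real)^k * hn d X) \<longlonglongrightarrow> 0"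
          by (intro tendsto_mult_left_zero LIMSEQ_power_zero) simp
      qed simp
    qed
    hence "primitive d S" using prim_iff[OF linS] by simp
    thus "\<exists>n. primitive d ((Tadj ^^ n) \<circ> (T ^^ n))" unfolding S_def by blast
  next
    assume "\<exists>n. primitive d ((Tadj ^^ n) \<circ> (T ^^ n))"
    then obtain n where PS: "primitive d ((Tadj ^^ n) \<circ> (T ^^ n))" by blast
    define S where "S = (Tadj ^^ n) \<circ> (T ^^ n)"
    have linS: "linear_superop d S" unfolding S_def by (intro lin_comp lin_pow linA linT)
    have Sc: "\<And>A. A \<in> carrier_mat d d \<Longrightarrow> S A \<in> carrier_mat d d" using lin_car[OF linS] by blast
    have Ssa: "\<And>A B. A \<in> carrier_mat d d \<Longrightarrow> B \<in> carrier_mat d d \<Longrightarrow> hs d A (S B) = hs d (S A) B"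
      unfolding S_def using S_selfadj[OF adj linT] by simp
    have "basis_conv d S" using PS prim_iff[OF linS] unfolding S_def by simp
    from unif[OF linS this]
    obtain e where e0: "e \<longlonglongrightarrow> 0" and eb: "\<And>k X. X \<in> carrier_mat d d \<Longrightarrow> ctrace X = 0 \<Longrightarrow> hn d ((S ^^ k) X) \<le> e k * hn d X"
      by blast
    have "\<forall>\<^sub>F k in sequentially. e k < 1/2" using e0 by (rule order_tendstoD) simp
    then obtain K where eK: "\<And>k. k \<ge> K \<Longrightarrow> e k < 1/2" unfolding eventually_sequentially by blast
    define N :: nat where "N = 2^K"
    have N1: "N \<ge> 1" unfolding N_def by simp
    have eN: "e N < 1/2" using eK[of N] unfolding N_def by (simp add: less_imp_le)
    have SN: "hn d ((S ^^ N) X) \<le> hn d X / 2" if "X \<in> carrier_mat d d" "ctrace X = 0" for X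
    proof -
      have "hn d ((S ^^ N) X) \<le> e N * hn d X" by (rule eb[OF that])
      also have "\<dots> \<le> (1/2) * hn d X" using eN hn_nonneg by (intro mult_right_mono) auto
      finally show ?thesis by simp
    qed
    define c :: real where "c = root (2*N) (1/2)"
    have c0: "0 < c" and c1: "c < 1" unfolding c_def using N1 by (auto simp: real_root_lt_1_iff)
    have cN: "c ^ (2*N) = 1/2" unfolding c_def using N1 by (simp add: real_root_pow_pos2)
    have Tn: "hn d ((T ^^ n) X) \<le> c * hn d X" if X: "X \<in> carrier_mat d d" "ctrace X = 0" for X
    proof -
      have XS: "hn d (S X) ^ N \<le> hn d X ^ (N - 1) * hn d ((S ^^ N) X)"
        unfolding N_def by (rule pw[OF Sc Ssa X(1)])
      also have "\<dots> \<le> hn d X ^ (N - 1) * (hn d X / 2)"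
        using SN[OF X] hn_nonneg by (intro mult_left_mono) auto
      also have "\<dots> = hn d X ^ N / 2" using N1 by (simp add: power_eq_if)
      finally have h1: "hn d (S X) ^ N \<le> hn d X ^ N / 2" .
      have TnX: "(T ^^ n) X \<in> carrier_mat d d" using TkW[OF X] by auto
      have "hs d ((T ^^ n) X) ((T ^^ n) X) = hs d X (S X)"
        unfolding S_def using adjn2[OF adj linT X(1) TnX] by simp
      hence "hn d ((T ^^ n) X) ^ 2 = (cmod (hs d X (S X)))^2" using hnc[of "(T ^^ n) X"] by simp
      also have "\<dots> \<le> hn d X * hn d (S X)" by (rule hs_cs)
      finally have h2: "hn d ((T ^^ n) X) ^ 2 \<le> hn d X * hn d (S X)" .
      have "hn d ((T ^^ n) X) ^ (2*N) = (hn d ((T ^^ n) X) ^ 2) ^ N" by (simp add: power_mult)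
      also have "\<dots> \<le> (hn d X * hn d (S X)) ^ N" using h2 by (intro power_mono) auto
      also have "\<dots> = hn d X ^ N * hn d (S X) ^ N" by (simp add: power_mult_distrib)
      also have "\<dots> \<le> hn d X ^ N * (hn d X ^ N / 2)" using h1 hn_nonneg by (intro mult_left_mono) auto
      also have "\<dots> = hn d X ^ (N + N) / 2" by (simp only: power_add)
      also have "\<dots> = (c * hn d X) ^ (2*N)"
      proof -
        have "(c * hn d X) ^ (2*N) = c ^ (2*N) * hn d X ^ (2*N)" by (rule power_mult_distrib)
        also have "\<dots> = hn d X ^ (N + N) / 2" unfolding cN by (simp add: mult_2)
        finally show ?thesis by simp
      qed
      finally have le: "hn d ((T ^^ n) X) ^ (2*N) \<le> (c * hn d X) ^ (2*N)" .
      have eN2: "2 * N = Suc (2 * N - 1)" using N1 by simp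
      have "hn d ((T ^^ n) X) ^ Suc (2*N - 1) \<le> (c * hn d X) ^ Suc (2*N - 1)" using le unfolding eN2[symmetric] .
      moreover have "0 \<le> c * hn d X" using c0 hn_nonneg by simp
      ultimately show ?thesis by (rule power_le_imp_le_base)
    qed
    have decay: "(\<lambda>k. hn d ((T ^^ k) X)) \<longlonglongrightarrow> 0" if X: "X \<in> carrier_mat d d" "ctrace X = 0" for X
    proof (cases "n = 0")
      case True
      have "hn d ((T ^^ k) X) = 0" for k
      proof -
        have Y: "(T ^^ k) X \<in> carrier_mat d d" "ctrace ((T ^^ k) X) = 0" using TkW[OF X] by auto
        have "hn d ((T ^^ k) X) \<le> c * hn d ((T ^^ k) X)" using Tn[OF Y] True by simp
        thus ?thesis using c1 hn_nonneg[of d "(T ^^ k) X"] by (simp add: mult_le_cancel_right1)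
      qed
      thus ?thesis by simp
    next
      case False
      hence npos: "n > 0" by simp
      have q: "hn d ((T ^^ (n * q)) Y) \<le> c ^ q * hn d Y" if Y: "Y \<in> carrier_mat d d" "ctrace Y = 0" for Y q
      proof (induction q)
        case 0 thus ?case by simp
      next
        case (Suc q)
        have W: "(T ^^ (n * q)) Y \<in> carrier_mat d d" "ctrace ((T ^^ (n * q)) Y) = 0" using TkW[OF Y] by auto
        have "(T ^^ (n * Suc q)) Y = (T ^^ n) ((T ^^ (n * q)) Y)"
          by (simp add: funpow_add)
        hence "hn d ((T ^^ (n * Suc q)) Y) \<le> c * hn d ((T ^^ (n * q)) Y)" using Tn[OF W] by simp
        also have "\<dots> \<le> c * (c ^ q * hn d Y)" using Suc c0 by (intro mult_left_mono) auto
        finally show ?case by simp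
      qed
      define M where "M = (\<Sum>r<n. hn d ((T ^^ r) X))"
      have bnd: "hn d ((T ^^ k) X) \<le> c ^ (k div n) * M" for k
      proof -
        have R: "(T ^^ (k mod n)) X \<in> carrier_mat d d" "ctrace ((T ^^ (k mod n)) X) = 0" using TkW[OF X] by auto
        have k1: "(T ^^ (n * (k div n) + k mod n)) X = (T ^^ (n * (k div n))) ((T ^^ (k mod n)) X)"
          by (simp only: funpow_add comp_apply)
        have k2: "n * (k div n) + k mod n = k" by simp
        have "(T ^^ k) X = (T ^^ (n * (k div n))) ((T ^^ (k mod n)) X)" using k1 unfolding k2 .
        hence "hn d ((T ^^ k) X) \<le> c ^ (k div n) * hn d ((T ^^ (k mod n)) X)" using q[OF R] by simp
        also have "\<dots> \<le> c ^ (k div n) * M" unfolding M_def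
          using npos c0 by (intro mult_left_mono member_le_sum) (auto simp: hn_nonneg)
        finally show ?thesis .
      qed
      have "(\<lambda>k. c ^ (k div n)) \<longlonglongrightarrow> 0"
        using filterlim_compose[OF LIMSEQ_power_zero[of c] div_tendsto[OF npos]] c0 c1 by simp
      hence "(\<lambda>k. c ^ (k div n) * M) \<longlonglongrightarrow> 0" by (rule tendsto_mult_left_zero)
      show ?thesis
      proof (rule tendsto_sandwich[of "\<lambda>_. 0" _ _ "\<lambda>k. c ^ (k div n) * M"])
        show "\<forall>\<^sub>F k in sequentially. 0 \<le> hn d ((T ^^ k) X)" by (simp add: hn_nonneg)
        show "\<forall>\<^sub>F k in sequentially. hn d ((T ^^ k) X) \<le> c ^ (k div n) * M" using bnd by simp
      qed (use \<open>(\<lambda>k. c ^ (k div n) * M) \<longlonglongrightarrow> 0\<close> in simp_all)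
    qed
    have "basis_conv d T" by (rule basis_from_W[OF linT T1 decay])
    thus "primitive d T" using prim_iff[OF linT] by simp
  qed
qed

end
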